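(* In $\mathbb{R}^2\otimes\mathbb{R}^2\otimes\mathbb{R}^2$ with standard orthonormal basis $e_1,e_2$ of $\mathbb{R}^2$, for $t\in\mathbb{R}$ let $f_t=e_2\otimes e_1\otimes e_1+e_1\otimes e_2\otimes e_1+e_1\otimes e_1\otimes e_2+t\,e_2\otimes e_2\otimes e_2$. Then (1) $\|f_t\|_\sigma=|t|$ if $t\ge2$ or $t\le-1$, and $\|f_t\|_\sigma=\frac{2}{\sqrt{3-t}}$ if $-1\le t\le2$; (2) $\|f_t\|_\star=3-t$ if $t\le\frac13$, and $\|f_t\|_\star=\frac{(1+t)^{3/2}}{\sqrt t}$ if $t\ge\frac13$.
   Context: The tensor space carries the inner product induced from the standard one, with euclidean norm $\|\cdot\|_2$. A simple tensor is one of the form $v_1\otimes v_2\otimes v_3$. The spectral norm is $\|T\|_\sigma=\max\{|\langle T,v\rangle|: v \text{ simple},\ \|v\|_2=1\}$. The nuclear norm $\|T\|_\star$ is the minimum of $\sum_{i=1}^r\|v_i\|_2$ over all expressions $T=v_1+\cdots+v_r$ with $v_i$ simple tensors. *)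

theory Defs
  imports "HOL-Analysis.Analysis"
begin

text \<open>Tensors in R^2 (x) R^2 (x) R^2 are represented as elements of real^2^2^2;
  the library inner product on this type is exactly the induced (Frobenius) one,
  and norm is the euclidean norm.\<close>

type_synonym tensor3 = "real^2^2^2"

definition tprod3 :: "real^2 \<Rightarrow> real^2 \<Rightarrow> real^2 \<Rightarrow> tensor3" where
  "tprod3 a b c = (\<chi> i j k. a$i * b$j * c$k)"

definition simple_tensor :: "tensor3 \<Rightarrow> bool" where
  "simple_tensor v \<longleftrightarrow> (\<exists>a b c. v = tprod3 a b c)"

definition spectral_norm :: "tensor3 \<Rightarrow> real" where
  "spectral_norm T = Sup {\<bar>T \<bullet> v\<bar> | v. simple_tensor v \<and> norm v = 1}"

definition nuclear_norm :: "tensor3 \<Rightarrow> real" where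
  "nuclear_norm T = Inf {(\<Sum>i<r. norm (v i)) | (r::nat) (v::nat \<Rightarrow> tensor3).
      (\<forall>i<r. simple_tensor (v i)) \<and> T = (\<Sum>i<r. v i)}"

definition e1 :: "real^2" where "e1 = axis 0 1"
definition e2 :: "real^2" where "e2 = axis 1 1"

definition ftensor :: "real \<Rightarrow> tensor3" where
  "ftensor t = tprod3 e2 e1 e1 + tprod3 e1 e2 e1 + tprod3 e1 e1 e2 + t *\<^sub>R tprod3 e2 e2 e2"

end

theory Submission
  imports Defs
begin

lemma cs2: fixes a1 a2 w1 w2 :: real
  shows "\<bar>a1*w1 + a2*w2\<bar> \<le> sqrt(a1^2+a2^2) * sqrt(w1^2+w2^2)"
proof -
  have "(a1*w1 + a2*w2)^2 \<le> (a1^2+a2^2)*(w1^2+w2^2)"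
  proof -
    have "0 \<le> (a1*w2 - a2*w1)^2" by simp
    then show ?thesis by (simp add: power2_eq_square algebra_simps)
  qed
  hence "sqrt ((a1*w1 + a2*w2)^2) \<le> sqrt ((a1^2+a2^2)*(w1^2+w2^2))"
    using real_sqrt_le_mono by blast
  thus ?thesis by (simp add: real_sqrt_mult)
qed

lemma keyP:
  fixes L t a1 a2 u1 u2 :: real
  assumes L: "L \<ge> 0" and H: "\<And>X Y. X \<ge> 0 \<Longrightarrow> Y \<ge> 0 \<Longrightarrow> 4*X*Y + (X+t*Y)^2 \<le> L^2*(X+Y)^2"
  shows "\<bar>a2*u1^2 + 2*a1*u1*u2 + t*a2*u2^2\<bar> \<le> L * sqrt(a1^2+a2^2) * (u1^2+u2^2)"
proof -
  have e: "a2*u1^2 + 2*a1*u1*u2 + t*a2*u2^2 = a1*(2*u1*u2) + a2*(u1^2+t*u2^2)"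
    by (simp add: algebra_simps)
  have "(2*u1*u2)^2 + (u1^2+t*u2^2)^2 \<le> (L*(u1^2+u2^2))^2"
    using H[of "u1^2" "u2^2"] by (simp add: power_mult_distrib power2_eq_square algebra_simps)
  hence "sqrt ((2*u1*u2)^2 + (u1^2+t*u2^2)^2) \<le> sqrt ((L*(u1^2+u2^2))^2)"
    using real_sqrt_le_mono by blast
  also have "\<dots> = L*(u1^2+u2^2)" using L by simp
  finally have w: "sqrt ((2*u1*u2)^2 + (u1^2+t*u2^2)^2) \<le> L*(u1^2+u2^2)" .
  have "\<bar>a1*(2*u1*u2) + a2*(u1^2+t*u2^2)\<bar> \<le> sqrt(a1^2+a2^2) * sqrt((2*u1*u2)^2 + (u1^2+t*u2^2)^2)"
    by (rule cs2)
  also have "\<dots> \<le> sqrt(a1^2+a2^2) * (L*(u1^2+u2^2))"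
    using w by (simp add: mult_left_mono)
  finally show ?thesis using e by (simp add: algebra_simps)
qed

lemma key:
  fixes L t a1 a2 b1 b2 c1 c2 :: real
  assumes L: "L \<ge> 0" and H: "\<And>X Y. X \<ge> 0 \<Longrightarrow> Y \<ge> 0 \<Longrightarrow> 4*X*Y + (X+t*Y)^2 \<le> L^2*(X+Y)^2"
  shows "\<bar>a2*b1*c1 + a1*b2*c1 + a1*b1*c2 + t*a2*b2*c2\<bar>
     \<le> L * sqrt(a1^2+a2^2) * sqrt(b1^2+b2^2) * sqrt(c1^2+c2^2)"
proof -
  define na where "na = sqrt(a1^2+a2^2)"
  define nb where "nb = sqrt(b1^2+b2^2)"
  define nc where "nc = sqrt(c1^2+c2^2)"
  define P where "P = (\<lambda>u1 u2::real. a2*u1^2 + 2*a1*u1*u2 + t*a2*u2^2)"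
  define B where "B = a2*b1*c1 + a1*b2*c1 + a1*b1*c2 + t*a2*b2*c2"
  have nb2: "nb^2 = b1^2+b2^2" unfolding nb_def by simp
  have nc2: "nc^2 = c1^2+c2^2" unfolding nc_def by simp
  have nbp: "nb \<ge> 0" "nc \<ge> 0" "na \<ge> 0" unfolding nb_def nc_def na_def by auto
  show ?thesis
  proof (cases "nb = 0 \<or> nc = 0")
    case True
    then have "(b1 = 0 \<and> b2 = 0) \<or> (c1 = 0 \<and> c2 = 0)"
      unfolding nb_def nc_def by (auto simp: add_nonneg_eq_0_iff)
    then show ?thesis using L by auto
  next
    case False
    hence pos: "nb > 0" "nc > 0" using nbp by auto
    have id: "4*nb*nc*B = P (nc*b1+nb*c1) (nc*b2+nb*c2) - P (nc*b1-nb*c1) (nc*b2-nb*c2)"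
      unfolding P_def B_def by (simp add: power2_eq_square) (simp add: algebra_simps)
    have p1: "\<bar>P (nc*b1+nb*c1) (nc*b2+nb*c2)\<bar> \<le> L*na*((nc*b1+nb*c1)^2+(nc*b2+nb*c2)^2)"
      unfolding P_def na_def by (rule keyP[OF L H])
    have p2: "\<bar>P (nc*b1-nb*c1) (nc*b2-nb*c2)\<bar> \<le> L*na*((nc*b1-nb*c1)^2+(nc*b2-nb*c2)^2)"
      unfolding P_def na_def by (rule keyP[OF L H])
    have s: "((nc*b1+nb*c1)^2+(nc*b2+nb*c2)^2) + ((nc*b1-nb*c1)^2+(nc*b2-nb*c2)^2)
          = 2*nc^2*(b1^2+b2^2) + 2*nb^2*(c1^2+c2^2)"
      by (simp add: power2_eq_square algebra_simps)
    have gen: "\<And>x y S1 S2. \<bar>x\<bar> \<le> L*na*S1 \<Longrightarrow> \<bar>y\<bar> \<le> L*na*S2 \<Longrightarrow> \<bar>x - y\<bar> \<le> L*na*(S1+S2)"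
      by (simp add: distrib_left abs_triangle_ineq4 order_trans)
    have "\<bar>4*nb*nc*B\<bar> \<le> L*na*(2*nc^2*(b1^2+b2^2) + 2*nb^2*(c1^2+c2^2))"
      unfolding id s[symmetric] by (rule gen[OF p1 p2])
    also have "\<dots> = 4*nb*nc*(L*na*nb*nc)" unfolding nb2[symmetric] nc2[symmetric]
      by (simp add: power2_eq_square algebra_simps)
    finally have "4*nb*nc*\<bar>B\<bar> \<le> 4*nb*nc*(L*na*nb*nc)" using pos by (simp add: abs_mult)
    hence "\<bar>B\<bar> \<le> L*na*nb*nc" using pos by (simp add: mult_le_cancel_left_pos)
    thus ?thesis unfolding B_def na_def nb_def nc_def by simp
  qed
qed
lemma two0: "(0::2) = 2" by simp

lemma tprod_nth: "tprod3 a b c $ i $ j $ k = a$i*b$j*c$k"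
  by (simp add: tprod3_def)

lemma e_nth: "e1$1 = 0" "e1$2 = 1" "e2$1 = 1" "e2$2 = 0"
  by (simp_all add: e1_def e2_def axis_def two0[symmetric])

lemma f_nth: "ftensor t $ i $ j $ k = e2$i*e1$j*e1$k + e1$i*e2$j*e1$k + e1$i*e1$j*e2$k + t*(e2$i*e2$j*e2$k)"
  by (simp add: ftensor_def tprod_nth)

lemma f_inner: "ftensor t \<bullet> tprod3 a b c = a$1*b$2*c$2 + a$2*b$1*c$2 + a$2*b$2*c$1 + t*(a$1*b$1*c$1)"
  by (simp add: inner_vec_def sum_2 f_nth tprod_nth e_nth algebra_simps)

lemma norm2: "norm (a::real^2) = sqrt (a$1^2 + a$2^2)"
  by (simp add: norm_eq_sqrt_inner inner_vec_def sum_2 power2_eq_square)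

lemma norm_tprod: "norm (tprod3 a b c) = norm a * norm b * norm c"
proof -
  have "tprod3 a b c \<bullet> tprod3 a b c = (a \<bullet> a) * (b \<bullet> b) * (c \<bullet> c)"
    by (simp add: inner_vec_def sum_2 tprod_nth algebra_simps)
  thus ?thesis by (simp add: norm_eq_sqrt_inner real_sqrt_mult)
qed

lemma f_bound:
  assumes L: "L \<ge> 0" and H: "\<And>X Y. X \<ge> 0 \<Longrightarrow> Y \<ge> 0 \<Longrightarrow> 4*X*Y + (X+s*Y)^2 \<le> L^2*(X+Y)^2"
  assumes v: "simple_tensor v"
  shows "\<bar>ftensor s \<bullet> v\<bar> \<le> L * norm v"
proof -
  obtain a b c where v: "v = tprod3 a b c" using v unfolding simple_tensor_def by blast
  have "\<bar>a$1*b$2*c$2 + a$2*b$1*c$2 + a$2*b$2*c$1 + s*a$1*b$1*c$1\<bar>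
     \<le> L * sqrt((a$2)^2+(a$1)^2) * sqrt((b$2)^2+(b$1)^2) * sqrt((c$2)^2+(c$1)^2)"
    by (rule key[OF L H])
  thus ?thesis unfolding v f_inner norm_tprod norm2 by (simp add: algebra_simps)
qed


lemma sgnprod: fixes x y :: real shows "(x \<ge> 0 \<and> y \<ge> 0) \<or> (x \<le> 0 \<and> y \<le> 0) \<Longrightarrow> x*y \<ge> 0"
  by (auto intro: mult_nonneg_nonneg mult_nonpos_nonpos)

lemma H1:
  fixes t X Y :: real
  assumes t: "t \<ge> 2 \<or> t \<le> -1" and X: "X \<ge> 0" and Y: "Y \<ge> 0"
  shows "4*X*Y + (X+t*Y)^2 \<le> \<bar>t\<bar>^2*(X+Y)^2"
proof -
  have a: "((t-1)*(t+1))*X^2 \<ge> 0" using t by (intro mult_nonneg_nonneg sgnprod) auto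
  have b: "((t-2)*(t+1))*(X*Y) \<ge> 0" using t X Y by (intro mult_nonneg_nonneg sgnprod) auto
  have "\<bar>t\<bar>^2*(X+Y)^2 - (4*X*Y + (X+t*Y)^2) = ((t-1)*(t+1))*X^2 + 2*(((t-2)*(t+1))*(X*Y))"
    by (simp add: power2_eq_square algebra_simps)
  thus ?thesis using a b by linarith
qed

lemma H2:
  fixes t X Y :: real
  assumes t: "-1 \<le> t" "t \<le> 2" and X: "X \<ge> 0" and Y: "Y \<ge> 0"
  shows "4*X*Y + (X+t*Y)^2 \<le> (2 / sqrt (3-t))^2*(X+Y)^2"
proof -
  have p: "3 - t > 0" using t by simp
  have a: "(1+t)*(X-(2-t)*Y)^2 \<ge> 0" using t by simp
  have "4*(X+Y)^2 - (3-t)*(4*X*Y + (X+t*Y)^2) = (1+t)*(X-(2-t)*Y)^2"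
    by (simp add: power2_eq_square algebra_simps)
  hence "(3-t)*(4*X*Y + (X+t*Y)^2) \<le> 4*(X+Y)^2" using a by linarith
  moreover have "(2 / sqrt (3-t))^2 = 4/(3-t)" using p by (simp add: power_divide)
  ultimately show ?thesis using p by (simp add: field_simps mult.commute)
qed

lemma spec_eq:
  assumes L: "L \<ge> 0" and H: "\<And>X Y. X \<ge> 0 \<Longrightarrow> Y \<ge> 0 \<Longrightarrow> 4*X*Y + (X+t*Y)^2 \<le> L^2*(X+Y)^2"
  and w: "norm (tprod3 a b c) = 1" "\<bar>ftensor t \<bullet> tprod3 a b c\<bar> = L"
  shows "spectral_norm (ftensor t) = L"
  unfolding spectral_norm_def
proof (rule cSup_eq_maximum)
  show "L \<in> {\<bar>ftensor t \<bullet> v\<bar> |v. simple_tensor v \<and> norm v = 1}"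
    using w unfolding simple_tensor_def by blast
next
  fix x assume "x \<in> {\<bar>ftensor t \<bullet> v\<bar> |v. simple_tensor v \<and> norm v = 1}"
  then obtain v where "x = \<bar>ftensor t \<bullet> v\<bar>" "simple_tensor v" "norm v = 1" by blast
  thus "x \<le> L" using f_bound[OF L H] by fastforce
qed

definition mk :: "real \<Rightarrow> real \<Rightarrow> real^2" where "mk p q = (\<chi> i. if i = 1 then p else q)"
lemma mk_nth[simp]: "mk p q $ 1 = p" "mk p q $ 2 = q" by (simp_all add: mk_def)

lemma f_f: "ftensor t \<bullet> ftensor u = 3 + t * u"
  by (simp add: inner_vec_def sum_2 f_nth e_nth algebra_simps)

lemma spec1: "t \<ge> 2 \<or> t \<le> -1 \<Longrightarrow> spectral_norm (ftensor t) = \<bar>t\<bar>"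
proof (rule spec_eq[of _ _ e2 e2 e2])
  fix X Y :: real assume "t \<ge> 2 \<or> t \<le> -1" "X \<ge> 0" "Y \<ge> 0"
  thus "4*X*Y + (X+t*Y)^2 \<le> \<bar>t\<bar>^2*(X+Y)^2" by (rule H1)
qed (auto simp: norm_tprod norm2 f_inner e_nth)

lemma spec2: assumes t: "-1 \<le> t" "t \<le> 2" shows "spectral_norm (ftensor t) = 2 / sqrt (3-t)"
proof -
  define p where "p = sqrt (1/(3-t))"
  define q where "q = sqrt ((2-t)/(3-t))"
  have tp: "3-t > 0" using t by simp
  have p2: "p^2 = 1/(3-t)" unfolding p_def using tp by simp
  have q2: "q^2 = (2-t)/(3-t)" unfolding q_def using t by simp
  have "p^2+q^2 = 1" unfolding p2 q2 using tp by (simp add: field_simps)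
  hence n: "norm (mk p q) = 1" unfolding norm2 by simp
  have "ftensor t \<bullet> tprod3 (mk p q) (mk p q) (mk p q) = p*(3*q^2 + t*p^2)"
    unfolding f_inner by (simp add: power2_eq_square algebra_simps)
  also have "3*q^2 + t*p^2 = 2"
  proof -
    have nz: "3 - t \<noteq> 0" using tp by simp
    have "3*q^2 + t*p^2 = (3*(2-t) + t)/(3-t)" unfolding p2 q2 by (simp add: add_divide_distrib[symmetric])
    also have "3*(2-t) + t = 2*(3-t)" by simp
    finally show ?thesis using nz by (simp add: divide_eq_eq)
  qed
  finally have v: "ftensor t \<bullet> tprod3 (mk p q) (mk p q) (mk p q) = 2/sqrt(3-t)"
    unfolding p_def by (simp add: real_sqrt_divide)
  show ?thesis
    by (rule spec_eq[of _ _ "mk p q" "mk p q" "mk p q"]) (use t tp n v in \<open>auto intro: H2 simp: norm_tprod\<close>)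
qed


lemma nuc_lower:
  assumes L: "L \<ge> 0" and H: "\<And>X Y. X \<ge> 0 \<Longrightarrow> Y \<ge> 0 \<Longrightarrow> 4*X*Y + (X+s*Y)^2 \<le> L^2*(X+Y)^2"
  and v: "\<forall>i<r. simple_tensor (v i)" and T: "ftensor t = (\<Sum>i<r. v i)"
  shows "3 + t * s \<le> L * (\<Sum>i<r. norm (v i))"
proof -
  have "3 + t * s = ftensor t \<bullet> ftensor s" by (simp add: f_f)
  also have "\<dots> = (\<Sum>i<r. v i \<bullet> ftensor s)" unfolding T by (simp add: inner_sum_left)
  also have "\<dots> \<le> (\<Sum>i<r. L * norm (v i))"
  proof (rule sum_mono)
    fix i assume "i \<in> {..<r}"
    hence "\<bar>ftensor s \<bullet> v i\<bar> \<le> L * norm (v i)" using f_bound[OF L H] v by auto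
    thus "v i \<bullet> ftensor s \<le> L * norm (v i)" by (simp add: inner_commute)
  qed
  also have "\<dots> = L * (\<Sum>i<r. norm (v i))" by (simp add: sum_distrib_left)
  finally show ?thesis .
qed

lemma nuc_eq:
  fixes r :: nat and v :: "nat \<Rightarrow> tensor3"
  assumes low: "\<And>(r::nat) (v::nat \<Rightarrow> tensor3). \<forall>i<r. simple_tensor (v i) \<Longrightarrow> ftensor t = (\<Sum>i<r. v i) \<Longrightarrow> z \<le> (\<Sum>i<r. norm (v i))"
  and w: "\<forall>i<r. simple_tensor (v i)" "ftensor t = (\<Sum>i<r. v i)" "(\<Sum>i<r. norm (v i)) = z"
  shows "nuclear_norm (ftensor t) = z"
  unfolding nuclear_norm_def
proof (rule cInf_eq_minimum)
  show "z \<in> {\<Sum>i<r. norm (v i) |(r::nat) (v::nat \<Rightarrow> tensor3). (\<forall>i<r. simple_tensor (v i)) \<and> ftensor t = (\<Sum>i<r. v i)}"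
    using w(1,2) w(3)[symmetric] by blast
next
  fix x assume "x \<in> {\<Sum>i<r. norm (v i) |(r::nat) (v::nat \<Rightarrow> tensor3). (\<forall>i<r. simple_tensor (v i)) \<and> ftensor t = (\<Sum>i<r. v i)}"
  thus "z \<le> x" using low by blast
qed

lemma norm_tp: "norm (tprod3 (c *\<^sub>R u) u u) = \<bar>c\<bar> * norm u ^ 3"
  by (simp add: norm_tprod power3_eq_cube)

lemma simple_tp: "simple_tensor (tprod3 a b c)" unfolding simple_tensor_def by blast

lemma nuc1: assumes t: "t \<le> 1/3" shows "nuclear_norm (ftensor t) = 3 - t"
proof -
  define h where "h = sqrt 3 / 2"
  have h2: "h*h = 3/4" unfolding h_def by simp
  define uA where "uA = mk (1/2) h"
  define uB where "uB = mk (1/2) (-h)"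
  define uC where "uC = mk (-1) 0"
  define v where "v = (\<lambda>i::nat. if i = 0 then tprod3 ((4/3) *\<^sub>R uA) uA uA
     else if i = 1 then tprod3 ((4/3) *\<^sub>R uB) uB uB else tprod3 ((1/3 - t) *\<^sub>R uC) uC uC)"
  have s3: "(\<Sum>i<3. w i) = w 0 + w 1 + w (2::nat)" for w :: "nat \<Rightarrow> tensor3"
    by (simp add: numeral_3_eq_3 numeral_2_eq_2 lessThan_Suc)
  have s3r: "(\<Sum>i<3. w i) = w 0 + w 1 + w (2::nat)" for w :: "nat \<Rightarrow> real"
    by (simp add: numeral_3_eq_3 numeral_2_eq_2 lessThan_Suc)
  have nA: "norm uA = 1" unfolding uA_def norm2 using h2 by (simp add: power2_eq_square)
  have nB: "norm uB = 1" unfolding uB_def norm2 using h2 by (simp add: power2_eq_square)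
  have nC: "norm uC = 1" unfolding uC_def norm2 by simp
  have dec: "ftensor t = (\<Sum>i<3. v i)"
    unfolding s3 v_def uA_def uB_def uC_def
    by (simp add: vec_eq_iff forall_2 f_nth e_nth tprod_nth algebra_simps h2)
  have nsum: "(\<Sum>i<3. norm (v i)) = 3 - t"
    unfolding s3r v_def using t by (simp add: norm_tp nA nB nC)
  show ?thesis
  proof (rule nuc_eq[OF _ _ dec nsum])
    show "\<forall>i<3. simple_tensor (v i)" unfolding v_def by (simp add: simple_tp)
  next
    fix r w assume "\<forall>i<r. simple_tensor (w i)" "ftensor t = (\<Sum>i<r. w i)"
    from nuc_lower[of 1 "-1", OF _ _ this] show "3 - t \<le> (\<Sum>i<r. norm (w i))"
      using H1[of "-1"] by simp
  qed
qed


lemma powr32: fixes x :: real assumes "x > 0" shows "x powr (3/2) = x * sqrt x"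
proof -
  have "x powr (3/2) = x powr (1 + 1/2)" by simp
  also have "\<dots> = x powr 1 * x powr (1/2)" by (rule powr_add)
  finally show ?thesis using assms by (simp add: powr_half_sqrt)
qed

lemma nuc2: assumes t: "t \<ge> 1/3" shows "nuclear_norm (ftensor t) = (1 + t) powr (3/2) / sqrt t"
proof -
  have tp: "t > 0" using t by simp
  define r where "r = sqrt t"
  have rp: "r > 0" unfolding r_def using tp by simp
  have r2: "r*r = t" unfolding r_def using tp by simp
  define uP where "uP = mk r 1"
  define uM where "uM = mk r (-1)"
  define v where "v = (\<lambda>i::nat. if i = 0 then tprod3 ((1/(2*r)) *\<^sub>R uP) uP uP
     else tprod3 ((1/(2*r)) *\<^sub>R uM) uM uM)"
  have s2: "(\<Sum>i<2. w i) = w 0 + w (1::nat)" for w :: "nat \<Rightarrow> tensor3"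
    by (simp add: numeral_2_eq_2 lessThan_Suc)
  have s2r: "(\<Sum>i<2. w i) = w 0 + w (1::nat)" for w :: "nat \<Rightarrow> real"
    by (simp add: numeral_2_eq_2 lessThan_Suc)
  have nP: "norm uP = sqrt (1+t)" unfolding uP_def norm2 using r2 by (simp add: power2_eq_square add.commute)
  have nM: "norm uM = sqrt (1+t)" unfolding uM_def norm2 using r2 by (simp add: power2_eq_square add.commute)
  have dec: "ftensor t = (\<Sum>i<2. v i)"
    unfolding s2 v_def uP_def uM_def using rp
    by (simp add: vec_eq_iff forall_2 f_nth e_nth tprod_nth field_simps r2[symmetric])
  have "(\<Sum>i<2. norm (v i)) = 2 * (1/(2*r)) * sqrt (1+t)^3"
    unfolding s2r v_def using rp by (simp add: norm_tp nP nM)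
  also have "\<dots> = (1 + t) powr (3/2) / sqrt t"
  proof -
    have "sqrt (1+t)^3 = (1+t) * sqrt (1+t)" using tp
      by (simp add: power3_eq_cube)
    thus ?thesis using rp powr32[of "1+t"] tp unfolding r_def by simp
  qed
  finally have nsum: "(\<Sum>i<2. norm (v i)) = (1 + t) powr (3/2) / sqrt t" .
  define s where "s = 2 - 1/t"
  define L where "L = 2 / sqrt (3 - s)"
  have s1: "-1 \<le> s" "s \<le> 2" unfolding s_def using t tp by (simp_all add: field_simps)
  have s3: "3 - s = (1+t)/t" unfolding s_def using tp by (simp add: field_simps)
  have Lp: "L > 0" unfolding L_def using s1 by simp
  have ts: "3 + t * s = 2*(1+t)" unfolding s_def using tp by (simp add: field_simps)
  have goal: "(1 + t) powr (3/2) / sqrt t = 2*(1+t) / L"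
    unfolding L_def s3 using tp powr32[of "1+t"] by (simp add: real_sqrt_divide field_simps)
  show ?thesis
  proof (rule nuc_eq[OF _ _ dec nsum])
    show "\<forall>i<2. simple_tensor (v i)" unfolding v_def by (simp add: simple_tp)
  next
    fix r :: nat and w :: "nat \<Rightarrow> tensor3" assume "\<forall>i<r. simple_tensor (w i)" "ftensor t = (\<Sum>i<r. w i)"
    from nuc_lower[of L s, OF _ _ this] have "2*(1+t) \<le> L * (\<Sum>i<r. norm (w i))"
      using H2[OF s1] Lp unfolding ts L_def by simp
    thus "(1 + t) powr (3/2) / sqrt t \<le> (\<Sum>i<r. norm (w i))"
      unfolding goal using Lp by (simp add: divide_le_eq mult.commute)
  qed
qed

theorem mainTheorem19:
  fixes t :: real
  shows "((t \<ge> 2 \<or> t \<le> -1) \<longrightarrow> spectral_norm (ftensor t) = \<bar>t\<bar>)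
       \<and> ((-1 \<le> t \<and> t \<le> 2) \<longrightarrow> spectral_norm (ftensor t) = 2 / sqrt (3 - t))
       \<and> (t \<le> 1/3 \<longrightarrow> nuclear_norm (ftensor t) = 3 - t)
       \<and> (t \<ge> 1/3 \<longrightarrow> nuclear_norm (ftensor t) = (1 + t) powr (3/2) / sqrt t)"
  using spec1 spec2 nuc1 nuc2 by blast

end
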